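(* Let $p \in \{1, \infty\}$ and let $f:\mathbb{R}^n \to \mathbb{R}^n$ be a Lipschitz, differentiable vector field. Then $f$ is weakly infinitesimally contracting (WIC) with respect to the $p$-norm if and only if there exist a real number $\gamma$ and a differentiable Lipschitz map $\phi:\mathbb{R}^n\to\mathbb{R}^n$ with $\|\phi\|_{\mathrm{Lip},p} \le \gamma$ such that \[ f(x) = -\gamma x + \phi(x) \quad \text{for all } x \in \mathbb{R}^n. \]
   Context: For $x\in\mathbb{R}^n$, $\|x\|_1=\sum_i |x_i|$ and $\|x\|_\infty=\max_i |x_i|$; for a matrix $A$, $\|A\|_p=\sup_{x\neq 0}\|Ax\|_p/\|x\|_p$ is the induced norm. The matrix measure (logarithmic norm) of $A\in\mathbb{R}^{n\times n}$ is $\mu_p(A)=\lim_{h\to 0^+}\frac{\|I+hA\|_p-1}{h}$; explicitly $\mu_1(A)=\max_j\big(a_{jj}+\sum_{i\neq j}|a_{ij}|\big)$ and $\mu_\infty(A)=\max_i\big(a_{ii}+\sum_{j\neq i}|a_{ij}|\big)$. $Df(x)$ denotes the Jacobian of $f$ at $x$. A vector field $f$ is WIC with respect to the $p$-norm if $\sup_{x\in\mathbb{R}^n}\mu_p(Df(x))\le 0$. For a differentiable $\phi:\mathbb{R}^n\to\mathbb{R}^n$, its Lipschitz constant with respect to the $p$-norm is $\|\phi\|_{\mathrm{Lip},p}=\sup_{x\in\mathbb{R}^n}\|D\phi(x)\|_p$. *)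

theory Defs
  imports "HOL-Analysis.Analysis"
begin

datatype pnorm = P1 | PInf

definition vnorm :: "pnorm \<Rightarrow> real^'n \<Rightarrow> real" where
  "vnorm p x = (case p of
      P1 \<Rightarrow> (\<Sum>i\<in>UNIV. \<bar>x $ i\<bar>)
    | PInf \<Rightarrow> Max ((\<lambda>i. \<bar>x $ i\<bar>) ` UNIV))"

definition mnorm :: "pnorm \<Rightarrow> real^'n^'n \<Rightarrow> real" where
  "mnorm p A = Sup {vnorm p (A *v x) / vnorm p x | x. x \<noteq> 0}"

text \<open>Matrix measure (logarithmic norm), explicit formulas for p = 1 and p = infinity.\<close>
definition mu :: "pnorm \<Rightarrow> real^'n^'n \<Rightarrow> real" where
  "mu p A = (case p of
      P1 \<Rightarrow> Max ((\<lambda>j. A $ j $ j + (\<Sum>i\<in>UNIV - {j}. \<bar>A $ i $ j\<bar>)) ` UNIV)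
    | PInf \<Rightarrow> Max ((\<lambda>i. A $ i $ i + (\<Sum>j\<in>UNIV - {i}. \<bar>A $ i $ j\<bar>)) ` UNIV))"

definition jac :: "(real^'n \<Rightarrow> real^'n) \<Rightarrow> real^'n \<Rightarrow> real^'n^'n" where
  "jac f x = matrix (frechet_derivative f (at x))"

definition WIC :: "pnorm \<Rightarrow> (real^'n \<Rightarrow> real^'n) \<Rightarrow> bool" where
  "WIC p f \<longleftrightarrow> (SUP x. mu p (jac f x)) \<le> 0"

definition lip_const :: "pnorm \<Rightarrow> (real^'n \<Rightarrow> real^'n) \<Rightarrow> real" where
  "lip_const p \<phi> = (SUP x. mnorm p (jac \<phi> x))"

end

theory Submission
  imports Defs
begin

definition MM :: "pnorm \<Rightarrow> real^'n^'n \<Rightarrow> real" where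
  "MM p A = (case p of
      P1 \<Rightarrow> Max ((\<lambda>j. \<Sum>i\<in>UNIV. \<bar>A $ i $ j\<bar>) ` UNIV)
    | PInf \<Rightarrow> Max ((\<lambda>i. \<Sum>j\<in>UNIV. \<bar>A $ i $ j\<bar>) ` UNIV))"

lemma vnorm_pos:
  fixes x :: "real^'n"
  assumes "x \<noteq> 0" shows "vnorm p x > 0"
proof -
  obtain k where k: "x $ k \<noteq> 0" using assms by (metis vec_eq_iff zero_index)
  show ?thesis
  proof (cases p)
    case P1
    have "\<bar>x $ k\<bar> \<le> (\<Sum>i\<in>UNIV. \<bar>x $ i\<bar>)"
      by (rule member_le_sum) auto
    then show ?thesis using k P1 by (simp add: vnorm_def)
  next
    case PInf
    have "\<bar>x $ k\<bar> \<le> Max ((\<lambda>i. \<bar>x $ i\<bar>) ` UNIV)"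
      by (rule Max_ge) auto
    moreover have "0 < \<bar>x $ k\<bar>" using k by simp
    moreover have "vnorm p x = Max ((\<lambda>i. \<bar>x $ i\<bar>) ` UNIV)" using PInf by (simp add: vnorm_def)
    ultimately show ?thesis by linarith
  qed
qed

lemma vnorm_mult_le:
  fixes A :: "real^'n^'n"
  shows "vnorm p (A *v x) \<le> MM p A * vnorm p x"
proof (cases p)
  case P1
  have "(\<Sum>i\<in>UNIV. \<bar>(A *v x) $ i\<bar>) \<le> (\<Sum>i\<in>UNIV. \<Sum>j\<in>UNIV. \<bar>A $ i $ j\<bar> * \<bar>x $ j\<bar>)"
    unfolding matrix_vector_mult_def
    by (rule sum_mono) (auto intro: order_trans[OF sum_abs] simp: abs_mult)
  also have "\<dots> = (\<Sum>j\<in>UNIV. (\<Sum>i\<in>UNIV. \<bar>A $ i $ j\<bar>) * \<bar>x $ j\<bar>)"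
    by (subst sum.swap) (simp add: sum_distrib_right)
  also have "\<dots> \<le> (\<Sum>j\<in>UNIV. MM P1 A * \<bar>x $ j\<bar>)"
    by (rule sum_mono, rule mult_right_mono) (auto simp: MM_def intro: Max_ge)
  finally show ?thesis using P1 by (simp add: vnorm_def sum_distrib_left)
next
  case PInf
  let ?m = "Max ((\<lambda>i. \<bar>x $ i\<bar>) ` UNIV)"
  have xm: "\<bar>x $ j\<bar> \<le> ?m" for j by (rule Max_ge) auto
  have "\<bar>(A *v x) $ i\<bar> \<le> MM PInf A * ?m" for i
  proof -
    have "\<bar>(A *v x) $ i\<bar> \<le> (\<Sum>j\<in>UNIV. \<bar>A $ i $ j\<bar> * \<bar>x $ j\<bar>)"
      unfolding matrix_vector_mult_def
      by (auto intro: order_trans[OF sum_abs] simp: abs_mult)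
    also have "\<dots> \<le> (\<Sum>j\<in>UNIV. \<bar>A $ i $ j\<bar> * ?m)"
      by (rule sum_mono, rule mult_left_mono) (auto simp: xm)
    also have "\<dots> = (\<Sum>j\<in>UNIV. \<bar>A $ i $ j\<bar>) * ?m" by (simp add: sum_distrib_right)
    also have "\<dots> \<le> MM PInf A * ?m"
      by (rule mult_right_mono) (auto simp: MM_def intro: Max_ge order_trans[OF _ xm])
    finally show ?thesis .
  qed
  then show ?thesis using PInf by (simp add: vnorm_def)
qed

lemma vnorm_witness:
  fixes A :: "real^'n^'n"
  shows "\<exists>x. x \<noteq> 0 \<and> vnorm p x = 1 \<and> vnorm p (A *v x) \<ge> MM p A"
proof (cases p)
  case P1
  have "MM P1 A \<in> (\<lambda>j. \<Sum>i\<in>UNIV. \<bar>A $ i $ j\<bar>) ` UNIV"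
    unfolding MM_def by (simp; ((rule Max_in)?); auto)
  then obtain j where j: "MM P1 A = (\<Sum>i\<in>UNIV. \<bar>A $ i $ j\<bar>)" by auto
  have e: "(\<lambda>i. \<bar>axis j (1::real) $ i\<bar>) = (\<lambda>i. if i = j then 1 else 0)"
    by (auto simp: axis_def)
  have "vnorm P1 (axis j (1::real)) = 1"
    unfolding vnorm_def pnorm.case e by simp
  moreover have "vnorm P1 (A *v axis j 1) = MM P1 A"
    by (simp add: vnorm_def matrix_vector_mult_basis column_def j)
  moreover have "axis j (1::real) \<noteq> 0" by (simp add: axis_eq_0_iff)
  ultimately show ?thesis using P1 by (intro exI[of _ "axis j 1"]) auto
next
  case PInf
  have "MM PInf A \<in> (\<lambda>i. \<Sum>j\<in>UNIV. \<bar>A $ i $ j\<bar>) ` UNIV"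
    unfolding MM_def by (simp; ((rule Max_in)?); auto)
  then obtain i where i: "MM PInf A = (\<Sum>j\<in>UNIV. \<bar>A $ i $ j\<bar>)" by auto
  define x :: "real^'n" where "x = (\<chi> j. if A $ i $ j \<ge> 0 then 1 else -1)"
  have ax: "\<bar>x $ j\<bar> = 1" for j by (simp add: x_def)
  have im: "(\<lambda>j. \<bar>x $ j\<bar>) ` UNIV = {1}" using ax by auto
  have v1: "vnorm PInf x = 1" by (simp add: vnorm_def im)
  have "x \<noteq> 0" using ax by (metis abs_zero zero_index zero_neq_one)
  have c: "(A *v x) $ i = (\<Sum>j\<in>UNIV. \<bar>A $ i $ j\<bar>)"
    unfolding matrix_vector_mult_def x_def by (auto intro!: sum.cong)
  have "\<bar>(A *v x) $ i\<bar> \<le> vnorm PInf (A *v x)"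
    unfolding vnorm_def by simp
  then have "vnorm PInf (A *v x) \<ge> MM PInf A" using c i by simp
  then show ?thesis using PInf v1 \<open>x \<noteq> 0\<close> by auto
qed

lemma mnorm_eq: "mnorm p A = MM p A"
proof -
  obtain x where x: "x \<noteq> 0" "vnorm p x = 1" "vnorm p (A *v x) \<ge> MM p A"
    using vnorm_witness by blast
  have le: "vnorm p (A *v y) / vnorm p y \<le> MM p A" if "y \<noteq> 0" for y
    using vnorm_mult_le[of p A y] vnorm_pos[OF that, of p] by (simp add: divide_le_eq)
  have eq: "vnorm p (A *v x) / vnorm p x = MM p A" using le[OF x(1)] x by simp
  show ?thesis unfolding mnorm_def
  proof (rule cSup_eq_maximum)
    show "MM p A \<in> {vnorm p (A *v x) / vnorm p x |x. x \<noteq> 0}"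
      using eq x(1) by (metis (mono_tags, lifting) mem_Collect_eq)
  qed (use le in auto)
qed

lemma sum_remove_UNIV: "(\<Sum>i\<in>UNIV. h i) = h j + (\<Sum>i\<in>UNIV - {j}. h i)"
  for h :: "'n::finite \<Rightarrow> real"
  by (rule sum.remove) auto

lemma mu_le_MM:
  fixes A B :: "real^'n^'n"
  assumes B: "\<And>i j. B$i$j = A$i$j + (if i = j then \<gamma> else 0)"
  shows "mu p A + \<gamma> \<le> MM p B"
proof (cases p)
  case P1
  have "A $ j $ j + (\<Sum>i\<in>UNIV - {j}. \<bar>A $ i $ j\<bar>) \<le> MM P1 B - \<gamma>" for j
  proof -
    have "A $ j $ j + \<gamma> + (\<Sum>i\<in>UNIV - {j}. \<bar>A $ i $ j\<bar>)
        \<le> \<bar>B $ j $ j\<bar> + (\<Sum>i\<in>UNIV - {j}. \<bar>B $ i $ j\<bar>)"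
      using B by simp
    also have "\<dots> = (\<Sum>i\<in>UNIV. \<bar>B $ i $ j\<bar>)" by (rule sum_remove_UNIV[symmetric])
    also have "\<dots> \<le> MM P1 B" unfolding MM_def by simp
    finally show ?thesis by simp
  qed
  then have "mu P1 A \<le> MM P1 B - \<gamma>" unfolding mu_def by (simp add: Max.boundedI)
  then show ?thesis using P1 by simp
next
  case PInf
  have "A $ j $ j + (\<Sum>i\<in>UNIV - {j}. \<bar>A $ j $ i\<bar>) \<le> MM PInf B - \<gamma>" for j
  proof -
    have "A $ j $ j + \<gamma> + (\<Sum>i\<in>UNIV - {j}. \<bar>A $ j $ i\<bar>)
        \<le> \<bar>B $ j $ j\<bar> + (\<Sum>i\<in>UNIV - {j}. \<bar>B $ j $ i\<bar>)"
      using B by simp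
    also have "\<dots> = (\<Sum>i\<in>UNIV. \<bar>B $ j $ i\<bar>)" by (rule sum_remove_UNIV[symmetric])
    also have "\<dots> \<le> MM PInf B" unfolding MM_def by simp
    finally show ?thesis by simp
  qed
  then have "mu PInf A \<le> MM PInf B - \<gamma>" unfolding mu_def by (simp add: Max.boundedI)
  then show ?thesis using PInf by simp
qed

lemma MM_le_mu:
  fixes A B :: "real^'n^'n"
  assumes B: "\<And>i j. B$i$j = A$i$j + (if i = j then \<gamma> else 0)"
    and D: "\<And>k. A$k$k + \<gamma> \<ge> 0"
  shows "MM p B \<le> mu p A + \<gamma>"
proof (cases p)
  case P1
  have "(\<Sum>i\<in>UNIV. \<bar>B $ i $ j\<bar>) \<le> mu P1 A + \<gamma>" for j
  proof -
    have "(\<Sum>i\<in>UNIV. \<bar>B $ i $ j\<bar>) = \<bar>B $ j $ j\<bar> + (\<Sum>i\<in>UNIV - {j}. \<bar>B $ i $ j\<bar>)"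
      by (rule sum_remove_UNIV)
    also have "\<dots> = A $ j $ j + (\<Sum>i\<in>UNIV - {j}. \<bar>A $ i $ j\<bar>) + \<gamma>"
      using B D[of j] by simp
    also have "\<dots> \<le> mu P1 A + \<gamma>" unfolding mu_def by simp
    finally show ?thesis .
  qed
  then show ?thesis using P1 unfolding MM_def by (simp add: Max.boundedI)
next
  case PInf
  have "(\<Sum>i\<in>UNIV. \<bar>B $ j $ i\<bar>) \<le> mu PInf A + \<gamma>" for j
  proof -
    have "(\<Sum>i\<in>UNIV. \<bar>B $ j $ i\<bar>) = \<bar>B $ j $ j\<bar> + (\<Sum>i\<in>UNIV - {j}. \<bar>B $ j $ i\<bar>)"
      by (rule sum_remove_UNIV)
    also have "\<dots> = A $ j $ j + (\<Sum>i\<in>UNIV - {j}. \<bar>A $ j $ i\<bar>) + \<gamma>"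
      using B D[of j] by simp
    also have "\<dots> \<le> mu PInf A + \<gamma>" unfolding mu_def by simp
    finally show ?thesis .
  qed
  then show ?thesis using PInf unfolding MM_def by (simp add: Max.boundedI)
qed

lemma MM_bound:
  fixes B :: "real^'n^'n"
  assumes "\<And>i j. \<bar>B$i$j\<bar> \<le> c"
  shows "MM p B \<le> real CARD('n) * c"
proof -
  have "(\<Sum>i\<in>UNIV. \<bar>B $ i $ j\<bar>) \<le> real CARD('n) * c" for j
    using sum_bounded_above[of UNIV "\<lambda>i. \<bar>B $ i $ j\<bar>" c] assms by simp
  moreover have "(\<Sum>i\<in>UNIV. \<bar>B $ j $ i\<bar>) \<le> real CARD('n) * c" for j
    using sum_bounded_above[of UNIV "\<lambda>i. \<bar>B $ j $ i\<bar>" c] assms by simp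
  ultimately show ?thesis unfolding MM_def by (cases p) (simp_all add: Max.boundedI)
qed

lemma deriv_lip_bound:
  fixes f :: "'a::real_normed_vector \<Rightarrow> 'b::real_normed_vector"
  assumes L: "L-lipschitz_on UNIV f" and d: "(f has_derivative D) (at x)"
  shows "norm (D v) \<le> L * norm v"
proof (cases "v = 0")
  case True
  have "linear D" using d has_derivative_linear by blast
  then show ?thesis using True by (simp add: linear_0)
next
  case False
  have bl: "linear D" using d has_derivative_linear by blast
  have nv: "norm v > 0" using False by simp
  have main: "norm (D v) \<le> L * norm v + e * norm v" if e: "e > 0" for e
  proof -
    obtain r where r: "r > 0" and hr: "\<And>y. norm (y - x) < r \<Longrightarrow> norm (f y - f x - D (y - x)) \<le> e * norm (y - x)"
      using d e unfolding has_derivative_at_alt by blast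
    define t where "t = r / (2 * norm v)"
    have t: "t > 0" using r nv by (simp add: t_def)
    have ntv0: "norm (t *\<^sub>R v) = t * norm v" using t by simp
    also have "\<dots> = r / 2" using nv unfolding t_def by (simp add: field_simps)
    finally have ntv: "norm (t *\<^sub>R v) = r / 2" .
    define y where "y = x + t *\<^sub>R v"
    have yx: "y - x = t *\<^sub>R v" by (simp add: y_def)
    have a: "norm (f y - f x - D (t *\<^sub>R v)) \<le> e * norm (t *\<^sub>R v)"
      using hr[of y] ntv r unfolding yx by simp
    have b: "norm (f y - f x) \<le> L * norm (t *\<^sub>R v)"
      using lipschitz_onD[OF L, of y x] unfolding dist_norm yx by simp
    have c: "norm (D (t *\<^sub>R v)) \<le> norm (f y - f x) + norm (f y - f x - D (t *\<^sub>R v))"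
      using norm_triangle_ineq4[of "f y - f x" "f y - f x - D (t *\<^sub>R v)"] by simp
    have dd: "norm (D (t *\<^sub>R v)) = t * norm (D v)"
      using t by (simp add: linear.scaleR[OF bl])
    have "t * norm (D v) \<le> L * (t * norm v) + e * (t * norm v)"
      using a b c unfolding dd ntv0 by linarith
    also have "\<dots> = t * (L * norm v + e * norm v)" by (simp add: algebra_simps)
    finally show ?thesis using t by (rule mult_left_le_imp_le)
  qed
  show ?thesis
  proof (rule field_le_epsilon)
    fix e :: real assume "e > 0"
    have eq: "e / norm v * norm v = e" using nv by simp
    have "0 < e / norm v" using nv \<open>e > 0\<close> by simp
    from main[OF this] show "norm (D v) \<le> L * norm v + e"
      using eq by linarith
  qed
qed

lemma jac_entry:
  assumes "(f has_derivative D) (at x)"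
  shows "jac f x $ i $ j = D (axis j 1) $ i"
  by (simp add: jac_def matrix_def frechet_derivative_at[OF assms, symmetric])

lemma jac_entry_bound:
  fixes f :: "real^'n \<Rightarrow> real^'n"
  assumes L: "L-lipschitz_on UNIV f" and d: "f differentiable (at x)"
  shows "\<bar>jac f x $ i $ j\<bar> \<le> L"
proof -
  have fd: "(f has_derivative frechet_derivative f (at x)) (at x)"
    using d frechet_derivative_works by blast
  have "\<bar>jac f x $ i $ j\<bar> \<le> norm (frechet_derivative f (at x) (axis j 1))"
    unfolding jac_entry[OF fd] by (rule component_le_norm_cart)
  also have "\<dots> \<le> L" using deriv_lip_bound[OF L fd, of "axis j 1"] by simp
  finally show ?thesis .
qed

lemma jac_bdd:
  fixes f :: "real^'n \<Rightarrow> real^'n"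
  assumes L: "L-lipschitz_on UNIV f" and d: "\<forall>x. f differentiable (at x)"
  shows "mnorm p (jac f x) \<le> real CARD('n) * L"
  unfolding mnorm_eq using jac_entry_bound[OF L] d by (intro MM_bound) blast

theorem mainTheorem1:
  fixes p :: pnorm and f :: "real^'n \<Rightarrow> real^'n"
  assumes lip: "\<exists>L. L-lipschitz_on UNIV f"
    and diff: "\<forall>x. f differentiable (at x)"
  shows "WIC p f \<longleftrightarrow>
    (\<exists>(\<gamma>::real) \<phi>. (\<forall>x. \<phi> differentiable (at x)) \<and> (\<exists>L. L-lipschitz_on UNIV \<phi>)
        \<and> lip_const p \<phi> \<le> \<gamma> \<and> (\<forall>x. f x = - \<gamma> *\<^sub>R x + \<phi> x))"
proof
  assume W: "WIC p f"
  obtain L where L: "L-lipschitz_on UNIV f" using lip by blast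
  have L0: "L \<ge> 0" using lipschitz_on_nonneg[OF L] .
  define \<gamma> where "\<gamma> = L"
  define \<phi> where "\<phi> = (\<lambda>x. f x + \<gamma> *\<^sub>R x)"
  have fd: "(f has_derivative frechet_derivative f (at x)) (at x)" for x
    using diff frechet_derivative_works by blast
  have pd: "(\<phi> has_derivative (\<lambda>h. frechet_derivative f (at x) h + \<gamma> *\<^sub>R h)) (at x)" for x
    unfolding \<phi>_def by (intro derivative_intros fd)
  have ent: "jac \<phi> x $ i $ j = jac f x $ i $ j + (if i = j then \<gamma> else 0)" for x i j
    unfolding jac_entry[OF pd] jac_entry[OF fd] by (simp add: axis_def)
  have eb: "\<bar>jac f x $ i $ j\<bar> \<le> L" for x i j
    using jac_entry_bound[OF L] diff by blast
  have dg: "jac f x $ k $ k + \<gamma> \<ge> 0" for x k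
    using eb[of x k k] unfolding \<gamma>_def by linarith
  have eb2: "\<bar>jac \<phi> x $ i $ j\<bar> \<le> 2 * L" for x i j
    using eb[of x i j] unfolding ent \<gamma>_def by (auto simp: abs_if split: if_splits)
  have mub: "mu p (jac f x) \<le> real CARD('n) * (2 * L) - \<gamma>" for x
    using mu_le_MM[OF ent, of p x] MM_bound[OF eb2, of p x] by linarith
  have bdd: "bdd_above (range (\<lambda>x. mu p (jac f x)))"
    using mub by (intro bdd_aboveI2) 
  have mu0: "mu p (jac f x) \<le> 0" for x
    using cSUP_upper[OF _ bdd, of x] W unfolding WIC_def by simp
  have mn: "mnorm p (jac \<phi> x) \<le> \<gamma>" for x
    using MM_le_mu[OF ent dg, of p x] mu0[of x] unfolding mnorm_eq by linarith
  have "lip_const p \<phi> \<le> \<gamma>"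
    unfolding lip_const_def by (rule cSUP_least) (auto intro: mn)
  moreover have "\<forall>x. \<phi> differentiable (at x)"
    using pd differentiable_def by blast
  moreover have "(L + \<bar>\<gamma>\<bar> * 1)-lipschitz_on UNIV \<phi>"
    unfolding \<phi>_def by (intro lipschitz_on_add L lipschitz_on_cmult lipschitz_on_id)
  moreover have "\<forall>x. f x = - \<gamma> *\<^sub>R x + \<phi> x" by (simp add: \<phi>_def)
  ultimately show "\<exists>(\<gamma>::real) \<phi>. (\<forall>x. \<phi> differentiable (at x)) \<and> (\<exists>L. L-lipschitz_on UNIV \<phi>)
        \<and> lip_const p \<phi> \<le> \<gamma> \<and> (\<forall>x. f x = - \<gamma> *\<^sub>R x + \<phi> x)" by blast
next
  assume "\<exists>(\<gamma>::real) \<phi>. (\<forall>x. \<phi> differentiable (at x)) \<and> (\<exists>L. L-lipschitz_on UNIV \<phi>)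
        \<and> lip_const p \<phi> \<le> \<gamma> \<and> (\<forall>x. f x = - \<gamma> *\<^sub>R x + \<phi> x)"
  then obtain \<gamma> \<phi> K where pdiff: "\<forall>x. \<phi> differentiable (at x)" and K: "K-lipschitz_on UNIV \<phi>"
    and lc: "lip_const p \<phi> \<le> \<gamma>" and feq: "\<forall>x. f x = - \<gamma> *\<^sub>R x + \<phi> x" by blast
  have fe: "f = (\<lambda>x. - \<gamma> *\<^sub>R x + \<phi> x)" using feq by auto
  have pd: "(\<phi> has_derivative frechet_derivative \<phi> (at x)) (at x)" for x
    using pdiff frechet_derivative_works by blast
  have fd: "(f has_derivative (\<lambda>h. - \<gamma> *\<^sub>R h + frechet_derivative \<phi> (at x) h)) (at x)" for x
    unfolding fe by (intro derivative_intros pd)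
  have ent: "jac \<phi> x $ i $ j = jac f x $ i $ j + (if i = j then \<gamma> else 0)" for x i j
    unfolding jac_entry[OF pd] jac_entry[OF fd] by (simp add: axis_def)
  have bdd: "bdd_above (range (\<lambda>x. mnorm p (jac \<phi> x)))"
    using jac_bdd[OF K pdiff, of p] by (intro bdd_aboveI2) 
  have mu0: "mu p (jac f x) \<le> 0" for x
  proof -
    have "mu p (jac f x) + \<gamma> \<le> mnorm p (jac \<phi> x)"
      unfolding mnorm_eq by (rule mu_le_MM[OF ent])
    also have "\<dots> \<le> lip_const p \<phi>"
      unfolding lip_const_def by (rule cSUP_upper[OF _ bdd]) simp
    finally show ?thesis using lc by linarith
  qed
  show "WIC p f" unfolding WIC_def by (rule cSUP_least) (auto intro: mu0)
qed

end
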